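(* Let $n\ge2$, let $f_n$ be a primitive polynomial of degree $n$ over $\mathbb F_2$ with root $\alpha$, and identify $\mathbb F_2[x]/\langle f_n\rangle$ with $\mathbb F_{2^n}$. Let $q=2^{n-1}$ and $k=2^n-1=2q-1$. For $j=0,\dots,2^n-2$ let $H_{j,n}=\{\beta\in\mathbb F_{2^n}:\operatorname{Tr}(\alpha^j\beta)=0\}$ and $H_{j,n}^c=\mathbb F_{2^n}\setminus H_{j,n}$. Let $W_n$ be the $2q\times 2k$ $(0,1)$-matrix whose rows are indexed by the elements $x\in\mathbb F_{2^n}$ and whose columns are indexed by $H_{0,n},\dots,H_{k-1,n},H_{0,n}^c,\dots,H_{k-1,n}^c$ (the subgroups first, and the complement of $H_{j,n}$ in the column $k$ places after that of $H_{j,n}$), with entry $(W_n)_{x,A}=1$ if $x\in A$ and $0$ otherwise. Then $W_n$ has full rank $2q=2^n$ (as a matrix over $\mathbb Q$).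
   Context: $\operatorname{Tr}:\mathbb F_{2^n}\to\mathbb F_2$ is the trace map $\operatorname{Tr}(\beta)=\beta+\beta^2+\dots+\beta^{2^{n-1}}$; each $H_{j,n}$ is an additive subgroup of $\mathbb F_{2^n}$ of order $2^{n-1}$. *)

theory Defs
  imports "Jordan_Normal_Form.DL_Rank" "HOL-Computational_Algebra.Polynomial"
begin

text \<open>Absolute trace F_{2^n} -> F_2 (values lie in the prime field {0,1} of the field).\<close>
definition tr2 :: "nat \<Rightarrow> 'a::field \<Rightarrow> 'a" where
  "tr2 n \<beta> = (\<Sum>i<n. \<beta> ^ (2 ^ i))"

definition Hsub :: "nat \<Rightarrow> 'a::field \<Rightarrow> nat \<Rightarrow> 'a set" where
  "Hsub n \<alpha> j = {\<beta>. tr2 n (\<alpha> ^ j * \<beta>) = 0}"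

definition primitive_element :: "'a::field \<Rightarrow> bool" where
  "primitive_element \<alpha> \<longleftrightarrow> \<alpha> \<noteq> 0 \<and> (\<forall>x. x \<noteq> 0 \<longrightarrow> (\<exists>i. x = \<alpha> ^ i))"

text \<open>The matrix W_n over Q. Rows are indexed via an enumeration e of the field
  (row r corresponds to the element e r); columns 0..k-1 are H_0..H_{k-1},
  columns k..2k-1 are their complements.\<close>
definition Wmat :: "nat \<Rightarrow> 'a::field \<Rightarrow> (nat \<Rightarrow> 'a) \<Rightarrow> rat mat" where
  "Wmat n \<alpha> e = (let k = 2 ^ n - 1 in
     mat (2 ^ n) (2 * k) (\<lambda>(r, c).
       let A = (if c < k then Hsub n \<alpha> c else UNIV - Hsub n \<alpha> (c - k))
       in if e r \<in> A then 1 else 0))"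

end

theory Submission
  imports Defs
begin

lemma rank_full:
  fixes A :: "'a::field mat"
  assumes A: "A \<in> carrier_mat N nc"
    and sol: "\<And>y. y \<in> carrier_vec N \<Longrightarrow> \<exists>x\<in>carrier_vec nc. A *\<^sub>v x = y"
  shows "vec_space.rank N A = N"
proof -
  interpret vec_space "TYPE('a)" N .
  have "col_space A = carrier_vec N"
    using A sol unfolding col_space_eq[OF A] by auto
  then have "span (set (cols A)) = carrier V" unfolding col_space_def by simp
  then have "span_vs (set (cols A)) = V" by simp
  then show ?thesis unfolding rank_def using dim_is_n by simp
qed

lemma sum_split2: "(\<Sum>c<2 * k. (g::nat \<Rightarrow> 'b::comm_monoid_add) c) = (\<Sum>j<k. g j + g (j + k))"
proof -
  have "(\<Sum>c<2 * k. g c) = (\<Sum>c\<in>{0..<k}. g c) + (\<Sum>c\<in>{k..<k+k}. g c)"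
    using sum.atLeastLessThan_concat[of 0 k "k+k" g] by (simp add: mult_2 atLeast0LessThan)
  also have "(\<Sum>c\<in>{k..<k+k}. g c) = (\<Sum>j\<in>{0..<k}. g (j + k))"
    using sum.shift_bounds_nat_ivl[of g 0 k k] by simp
  finally show ?thesis by (simp add: sum.distrib atLeast0LessThan)
qed

locale ff2 =
  fixes n :: nat and ty :: "'a::{field,finite} itself"
  assumes cardF: "card (UNIV :: 'a set) = 2 ^ n"
    and char2: "(1::'a) + 1 = 0"
    and n1: "n \<ge> 1"
begin

lemma dbl0: "(x::'a) + x = 0"
proof -
  have "x + x = x * (1 + 1)" by (simp add: algebra_simps)
  then show ?thesis using char2 by simp
qed

lemma neg_eq: "- (x::'a) = x"
  using dbl0[of x] by (simp add: add_eq_0_iff)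

lemma frob: "((a::'a) + b) ^ 2 = a ^ 2 + b ^ 2"
proof -
  have "(a + b) ^ 2 = a ^ 2 + b ^ 2 + (a * b + a * b)" by (simp add: power2_eq_square algebra_simps)
  then show ?thesis using dbl0[of "a*b"] by simp
qed

lemma frob_pow: "((a::'a) + b) ^ (2 ^ i) = a ^ (2 ^ i) + b ^ (2 ^ i)"
proof (induction i)
  case 0 then show ?case by simp
next
  case (Suc i)
  have "(a + b) ^ (2 ^ Suc i) = ((a + b) ^ (2 ^ i)) ^ 2" by (simp add: power_mult[symmetric] mult.commute)
  also have "\<dots> = (a ^ (2 ^ i)) ^ 2 + (b ^ (2 ^ i)) ^ 2" using Suc frob by simp
  also have "\<dots> = a ^ (2 ^ Suc i) + b ^ (2 ^ Suc i)" by (simp add: power_mult[symmetric] mult.commute)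
  finally show ?case .
qed

lemma tr_add: "tr2 n ((a::'a) + b) = tr2 n a + tr2 n b"
  unfolding tr2_def by (simp add: frob_pow sum.distrib)

lemma frob_sum: "(\<Sum>i<(m::nat). (f i::'a)) ^ 2 = (\<Sum>i<m. f i ^ 2)"
  by (induction m) (simp_all add: frob)

lemma nonzero_pow: assumes "(x::'a) \<noteq> 0" shows "x ^ (2 ^ n - 1) = 1"
proof -
  let ?S = "UNIV - {0::'a}"
  have inj: "inj_on (\<lambda>y. x * y) ?S" using assms by (auto simp: inj_on_def)
  have im: "(\<lambda>y. x * y) ` ?S = ?S"
  proof
    show "?S \<subseteq> (\<lambda>y. x * y) ` ?S"
    proof
      fix z assume "z \<in> ?S"
      then have "z = x * (z / x)" "z / x \<in> ?S" using assms by auto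
      then show "z \<in> (\<lambda>y. x * y) ` ?S" by blast
    qed
  qed (use assms in auto)
  have "prod id ?S = prod ((\<lambda>y. x * y)) ?S"
    using prod.reindex[OF inj, of id] im by simp
  also have "\<dots> = x ^ card ?S * prod id ?S" by (simp add: prod.distrib)
  finally have "prod id ?S * 1 = prod id ?S * x ^ card ?S" by (simp add: mult.commute)
  moreover have "prod id ?S \<noteq> 0" by (simp add: prod_zero_iff)
  ultimately have "x ^ card ?S = 1" by (metis mult_left_cancel)
  moreover have "card ?S = 2 ^ n - 1" using cardF by (simp add: card_Diff_singleton)
  ultimately show ?thesis by simp
qed

lemma pow_card: "(x::'a) ^ (2 ^ n) = x"
proof (cases "x = 0")
  case True then show ?thesis by simp
next
  case False
  have "(2::nat) ^ n = Suc (2 ^ n - 1)" by simp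
  then have "x ^ (2 ^ n) = x * x ^ (2 ^ n - 1)" by (metis power_Suc)
  then show ?thesis using nonzero_pow[OF False] by simp
qed

lemma tr_sq: "(tr2 n (t::'a)) ^ 2 = tr2 n t"
proof -
  have "(tr2 n t) ^ 2 = (\<Sum>i<n. t ^ (2 ^ Suc i))"
    unfolding tr2_def frob_sum by (simp add: power_mult[symmetric] mult.commute)
  moreover have "(\<Sum>i<Suc n. t ^ (2 ^ i)) = t + (\<Sum>i<n. t ^ (2 ^ Suc i))"
    by (subst sum.lessThan_Suc_shift) simp
  moreover have "(\<Sum>i<Suc n. t ^ (2 ^ i)) = tr2 n t + t"
    unfolding tr2_def using pow_card by simp
  ultimately show ?thesis by (simp add: add.commute)
qed

lemma tr01: "tr2 n (t::'a) = 0 \<or> tr2 n t = 1"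
proof -
  have "tr2 n t * (tr2 n t - 1) = 0" using tr_sq[of t] by (simp add: power2_eq_square algebra_simps)
  then show ?thesis by simp
qed

lemma tr_nonzero: "\<exists>w::'a. tr2 n w \<noteq> 0"
proof (rule ccontr)
  assume "\<not> ?thesis"
  then have all: "\<And>w::'a. tr2 n w = 0" by blast
  define P :: "'a poly" where "P = (\<Sum>i<n. monom 1 (2 ^ i))"
  have polyP: "poly P w = tr2 n w" for w unfolding P_def tr2_def by (simp add: poly_sum poly_monom)
  have degP: "degree P \<le> 2 ^ (n - 1)" unfolding P_def
  proof (rule degree_sum_le)
    fix i assume "i \<in> {..<n}"
    then have "(2::nat) ^ i \<le> 2 ^ (n - 1)" by (intro power_increasing) auto
    then show "degree (monom (1::'a) (2 ^ i)) \<le> 2 ^ (n - 1)" by (simp add: degree_monom_eq)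
  qed simp
  have "coeff P (2 ^ (n - 1)) = (\<Sum>i<n. if 2 ^ (n - 1) = (2::nat) ^ i then 1 else 0)"
    unfolding P_def by (simp add: coeff_sum coeff_monom)
  also have "\<dots> = (\<Sum>i\<in>{n - 1}. 1)"
    by (rule sum.mono_neutral_cong_right) (use n1 in auto)
  finally have "coeff P (2 ^ (n - 1)) = 1" by simp
  then have "P \<noteq> 0" by auto
  then have "card {x. poly P x = 0} \<le> degree P" by (rule card_poly_roots_bound)
  moreover have "{x. poly P x = 0} = UNIV" using all polyP by auto
  ultimately have "card (UNIV::'a set) \<le> degree P" by simp
  then have "2 ^ n \<le> (2::nat) ^ (n - 1)" using cardF degP by linarith
  moreover have "(2::nat) ^ (n - 1) < 2 ^ n" using n1 by (intro power_strict_increasing) auto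
  ultimately show False by linarith
qed

definition chi :: "'a \<Rightarrow> rat" where "chi t = (if tr2 n t = 0 then 1 else -1)"

lemma chi_pm: "chi t = 1 \<or> chi t = -1"
  unfolding chi_def by auto

lemma chi_add: "chi (a + b) = chi a * chi b"
  unfolding chi_def tr_add using tr01[of a] tr01[of b] char2 by auto

lemma tr0: "tr2 n (0::'a) = 0" unfolding tr2_def by simp

lemma char_sum: "(\<Sum>g\<in>UNIV. chi (g * z)) = (if z = 0 then 2 ^ n else 0)"
proof (cases "z = 0")
  case True then show ?thesis using cardF by (simp add: chi_def tr0)
next
  case False
  obtain w :: 'a where w: "tr2 n w \<noteq> 0" using tr_nonzero by blast
  define g0 where "g0 = w / z"
  have g0: "chi (g0 * z) = -1" using w False unfolding chi_def g0_def by simp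
  have bij: "bij (\<lambda>g. g + g0)" by (rule bijI') (auto intro: exI[of _ "_ - g0"])
  have "(\<Sum>g\<in>UNIV. chi (g * z)) = (\<Sum>g\<in>UNIV. chi ((g + g0) * z))"
    by (rule sum.reindex_bij_betw[symmetric]) (use bij in simp)
  also have "\<dots> = - (\<Sum>g\<in>UNIV. chi (g * z))"
    by (simp add: distrib_right chi_add g0 sum_negf)
  finally show ?thesis using False by simp
qed


lemma alpha_bij:
  assumes "primitive_element (\<alpha>::'a)"
  shows "bij_betw (\<lambda>j. \<alpha> ^ j) {..<2 ^ n - 1} (UNIV - {0})"
proof -
  let ?k = "2 ^ n - 1 :: nat"
  have a0: "\<alpha> \<noteq> 0" and gen: "\<And>x. x \<noteq> 0 \<Longrightarrow> \<exists>i. x = \<alpha> ^ i"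
    using assms unfolding primitive_element_def by auto
  have ak: "\<alpha> ^ ?k = 1" by (rule nonzero_pow[OF a0])
  have "(1::nat) < 2 ^ n" using n1 by (intro one_less_power) auto
  then have kpos: "?k > 0" by simp
  have im: "(\<lambda>j. \<alpha> ^ j) ` {..<?k} = UNIV - {0}"
  proof
    show "(\<lambda>j. \<alpha> ^ j) ` {..<?k} \<subseteq> UNIV - {0}" using a0 by auto
    show "UNIV - {0} \<subseteq> (\<lambda>j. \<alpha> ^ j) ` {..<?k}"
    proof
      fix x assume "x \<in> (UNIV::'a set) - {0}"
      then obtain i where i: "x = \<alpha> ^ i" using gen by auto
      have "\<alpha> ^ i = \<alpha> ^ (?k * (i div ?k) + i mod ?k)" by simp
      also have "\<dots> = \<alpha> ^ (i mod ?k)" unfolding power_add power_mult ak by simp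
      finally show "x \<in> (\<lambda>j. \<alpha> ^ j) ` {..<?k}" using i kpos by auto
    qed
  qed
  have "card (UNIV - {0::'a}) = ?k" using cardF by (simp add: card_Diff_singleton)
  then have "inj_on (\<lambda>j. \<alpha> ^ j) {..<?k}" using im by (simp add: inj_on_iff_eq_card)
  then show ?thesis using im unfolding bij_betw_def by simp
qed

lemma sum_UNIV_alpha:
  assumes "primitive_element (\<alpha>::'a)"
  shows "(\<Sum>g\<in>UNIV. h g) = h 0 + (\<Sum>j<2 ^ n - 1. h (\<alpha> ^ j))"
proof -
  have "(\<Sum>g\<in>UNIV. h g) = h 0 + (\<Sum>g\<in>UNIV - {0}. h g)"
    using sum.remove[of UNIV 0 h] by simp
  also have "(\<Sum>g\<in>UNIV - {0}. h g) = (\<Sum>j<2 ^ n - 1. h (\<alpha> ^ j))"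
    using sum.reindex_bij_betw[OF alpha_bij[OF assms], of h] by simp
  finally show ?thesis .
qed

lemma key:
  assumes "primitive_element (\<alpha>::'a)"
  shows "1 + (\<Sum>j<2 ^ n - 1. chi (\<alpha> ^ j * a) * chi (\<alpha> ^ j * w)) = (if a = w then 2 ^ n else 0)"
proof -
  have e1: "(\<Sum>j<2 ^ n - 1. chi (\<alpha> ^ j * a) * chi (\<alpha> ^ j * w)) = (\<Sum>j<2 ^ n - 1. chi (\<alpha> ^ j * (a + w)))"
    by (rule sum.cong) (simp_all only: chi_add[symmetric] distrib_left)
  have e2: "(\<Sum>g\<in>UNIV. chi (g * (a + w))) = chi (0 * (a + w)) + (\<Sum>j<2 ^ n - 1. chi (\<alpha> ^ j * (a + w)))"
    by (rule sum_UNIV_alpha[OF assms])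
  have e3: "chi (0 * (a + w)) = 1" by (simp add: chi_def tr0)
  have e4: "(a + w = 0) = (a = w)"
    by (metis add_eq_0_iff neg_eq)
  have "1 + (\<Sum>j<2 ^ n - 1. chi (\<alpha> ^ j * a) * chi (\<alpha> ^ j * w)) = (\<Sum>g\<in>UNIV. chi (g * (a + w)))"
    unfolding e1 e2 e3 ..
  also have "\<dots> = (if a = w then 2 ^ n else 0)" unfolding char_sum e4 ..
  finally show ?thesis .
qed

end



theorem mainTheorem4:
  fixes n :: nat and f :: "'a::{field,finite} poly" and \<alpha> :: 'a and e :: "nat \<Rightarrow> 'a"
  assumes "n \<ge> 2"
    and "card (UNIV :: 'a set) = 2 ^ n"
    and "(1::'a) + 1 = 0"
    and "degree f = n" and "lead_coeff f = 1" and "\<forall>i. coeff f i \<in> {0, 1}"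
    and "poly f \<alpha> = 0"
    and "primitive_element \<alpha>"
    and "bij_betw e {0..<2 ^ n} (UNIV :: 'a set)"
  shows "vec_space.rank (2 ^ n) (Wmat n \<alpha> e) = 2 ^ n"
proof -
  interpret F: ff2 n "TYPE('a)" by unfold_locales (use assms in auto)
  let ?N = "2 ^ n :: nat"
  let ?k = "2 ^ n - 1 :: nat"
  have kpos: "0 < ?k"
  proof -
    have "(1::nat) < 2 ^ n" using assms(1) by (intro one_less_power) auto
    then show ?thesis by simp
  qed
  define W where "W = Wmat n \<alpha> e"
  have Wc: "W \<in> carrier_mat ?N (2 * ?k)" unfolding W_def Wmat_def Let_def by simp
  have Wij: "W $$ (i, c) = (if c < ?k then (if F.chi (\<alpha> ^ c * e i) = 1 then 1 else 0)
      else (if F.chi (\<alpha> ^ (c - ?k) * e i) = 1 then 0 else 1))"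
    if "i < ?N" "c < 2 * ?k" for i c
    using that unfolding W_def Wmat_def Let_def Hsub_def F.chi_def by auto
  have inj_e: "inj_on e {..<?N}" using assms(9) unfolding bij_betw_def by (simp add: atLeast0LessThan)
  show ?thesis unfolding W_def[symmetric]
  proof (rule rank_full[OF Wc])
    fix y :: "rat vec" assume y: "y \<in> carrier_vec ?N"
    define Y where "Y = (\<Sum>r<?N. y $ r)"
    define S where "S j = (\<Sum>r<?N. y $ r * F.chi (\<alpha> ^ j * e r))" for j
    define x where "x = vec (2 * ?k) (\<lambda>c. if c < ?k then ((if c = 0 then Y else 0) + S c) / 2 ^ n
        else ((if c = ?k then Y else 0) - S (c - ?k)) / 2 ^ n)"
    have "W *\<^sub>v x = y"
    proof (rule eq_vecI)
      show "dim_vec (W *\<^sub>v x) = dim_vec y" using Wc y by simp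
      fix i assume "i < dim_vec y"
      then have i: "i < ?N" using y by simp
      have "(W *\<^sub>v x) $ i = (\<Sum>c<2 * ?k. W $$ (i, c) * x $ c)"
        using Wc i unfolding mult_mat_vec_def scalar_prod_def x_def by (simp add: atLeast0LessThan)
      also have "\<dots> = (\<Sum>j<?k. W $$ (i, j) * x $ j + W $$ (i, j + ?k) * x $ (j + ?k))"
        by (rule sum_split2)
      also have "\<dots> = (\<Sum>j<?k. ((if j = 0 then Y else 0) + F.chi (\<alpha> ^ j * e i) * S j) / 2 ^ n)"
      proof (rule sum.cong[OF refl])
        fix j assume "j \<in> {..<?k}"
        then have j: "j < ?k" by simp
        have xj: "x $ j = ((if j = 0 then Y else 0) + S j) / 2 ^ n" using j unfolding x_def by simp
        have c1: "j + ?k < 2 * ?k" using j by simp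
        have c2: "\<not> (j + ?k < ?k)" by simp
        have c3: "(j + ?k = ?k) = (j = 0)" by (metis add.left_neutral add_right_cancel)
        have c4: "j + ?k - ?k = j" by simp
        have xjk: "x $ (j + ?k) = ((if j = 0 then Y else 0) - S j) / 2 ^ n"
          unfolding x_def by (simp only: index_vec[OF c1] c2 c3 c4 if_False)
        have w1: "W $$ (i, j) = (if F.chi (\<alpha> ^ j * e i) = 1 then 1 else 0)" using Wij[OF i] j by simp
        have w2: "W $$ (i, j + ?k) = (if F.chi (\<alpha> ^ j * e i) = 1 then 0 else 1)" using Wij[OF i] j by simp
        show "W $$ (i, j) * x $ j + W $$ (i, j + ?k) * x $ (j + ?k)
            = ((if j = 0 then Y else 0) + F.chi (\<alpha> ^ j * e i) * S j) / 2 ^ n"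
          unfolding xj xjk w1 w2 using F.chi_pm[of "\<alpha> ^ j * e i"]
          by (auto simp: field_simps)
      qed
      also have "\<dots> = (Y + (\<Sum>j<?k. F.chi (\<alpha> ^ j * e i) * S j)) / 2 ^ n"
        using kpos by (simp add: sum_divide_distrib[symmetric] sum.distrib)
      also have "(\<Sum>j<?k. F.chi (\<alpha> ^ j * e i) * S j)
          = (\<Sum>r<?N. y $ r * (\<Sum>j<?k. F.chi (\<alpha> ^ j * e r) * F.chi (\<alpha> ^ j * e i)))"
        unfolding S_def sum_distrib_left by (subst sum.swap) (simp add: mult_ac)
      also have "Y + \<dots> = (\<Sum>r<?N. y $ r * (1 + (\<Sum>j<?k. F.chi (\<alpha> ^ j * e r) * F.chi (\<alpha> ^ j * e i))))"
        unfolding Y_def by (simp add: sum.distrib distrib_left)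
      also have "\<dots> = (\<Sum>r<?N. y $ r * (if e r = e i then 2 ^ n else 0))"
        using F.key[OF assms(8)] by simp
      also have "\<dots> = (\<Sum>r<?N. if r = i then y $ r * 2 ^ n else 0)"
      proof (rule sum.cong[OF refl])
        fix r assume "r \<in> {..<?N}"
        then have "(e r = e i) = (r = i)" using inj_e i unfolding inj_on_def by blast
        then show "y $ r * (if e r = e i then 2 ^ n else 0) = (if r = i then y $ r * 2 ^ n else 0)"
          by simp
      qed
      also have "\<dots> = y $ i * 2 ^ n" using i by simp
      finally show "(W *\<^sub>v x) $ i = y $ i" by simp
    qed
    moreover have "x \<in> carrier_vec (2 * ?k)" unfolding x_def by simp
    ultimately show "\<exists>x\<in>carrier_vec (2 * ?k). W *\<^sub>v x = y" by blast
  qed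
qed

end
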